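(* Let $n\ge 4$, $N=\{1,\dots,n\}$, fix $i_1\in N$ and let $\hat N^c=N\setminus\{i_1\}$. Then the inequality $$\sum_{j\in\hat N^c}\left(x_{i_1j}+x_{ji_1}\right)-\sum_{j,j'\in\hat N^c:\,j\ne j'} x_{jj'}\le 2-\frac{(n-2)(n-3)}{2}$$ is a valid inequality for the weak order polytope $P^n_{WO}$, i.e. it holds for every point $x\in P^n_{WO}$.
   Context: Let $N=\{1,\dots,n\}$ and $A_N=\{(i,j): i,j\in N, i\ne j\}$. A weak order on $N$ is a binary relation $W\subseteq N\times N$ that is reflexive, transitive and total; $(i,j)\in W$ is read "$i$ is preferred over or tied with $j$". The characteristic vector of $W$ is $x^W\in\{0,1\}^{A_N}$ with $x^W_{(i,j)}=1$ if $(i,j)\in W$ and $0$ otherwise. The weak order polytope $P^n_{WO}$ is the convex hull of the characteristic vectors of all weak orders on $N$; its points are vectors $x\in\mathbb{R}^{A_N}$ and $x_{ij}$ denotes the coordinate $x_{(i,j)}$. *)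

theory Defs
  imports "HOL-Analysis.Analysis"
begin

definition arcs :: "nat \<Rightarrow> (nat \<times> nat) set" where
  "arcs n = {(i, j). i \<in> {1..n} \<and> j \<in> {1..n} \<and> i \<noteq> j}"

definition weak_order :: "nat \<Rightarrow> (nat \<times> nat) set \<Rightarrow> bool" where
  "weak_order n W \<longleftrightarrow> W \<subseteq> {1..n} \<times> {1..n} \<and> refl_on {1..n} W \<and> trans W \<and> total_on {1..n} W"

text \<open>Characteristic vector in R^{A_N}; represented as a function on pairs which is
  zero outside A_N (coordinates outside A_N are not part of the space).\<close>

definition char_vec :: "nat \<Rightarrow> (nat \<times> nat) set \<Rightarrow> (nat \<times> nat \<Rightarrow> real)" where
  "char_vec n W = (\<lambda>a. if a \<in> arcs n \<and> a \<in> W then 1 else 0)"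

definition weak_order_polytope :: "nat \<Rightarrow> (nat \<times> nat \<Rightarrow> real) set" where
  "weak_order_polytope n =
     {x. \<exists>F c. finite F \<and> F \<subseteq> {W. weak_order n W} \<and> (\<forall>W\<in>F. 0 \<le> c W) \<and>
           sum c F = 1 \<and> x = (\<lambda>a. \<Sum>W\<in>F. c W * char_vec n W a)}"

end

theory Submission
  imports Defs
begin

lemma pairsum_conv:
  fixes f :: "nat \<times> nat \<Rightarrow> real"
  assumes "finite M"
  shows "(\<Sum>(j, j')\<in>{(j, j'). j \<in> M \<and> j' \<in> M \<and> j \<noteq> j'}. f (j, j'))
       = (\<Sum>j\<in>M. \<Sum>j'\<in>M. if j \<noteq> j' then f (j, j') else 0)"
proof -
  have "(\<Sum>j\<in>M. \<Sum>j'\<in>M. if j \<noteq> j' then f (j, j') else 0) = (\<Sum>j\<in>M. \<Sum>j'\<in>M - {j}. f (j, j'))"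
    apply (rule sum.cong, simp)
    apply (subst sum.If_cases, use assms in simp)
    by (simp add: Diff_eq Int_def) (rule sum.cong, auto)
  also have "\<dots> = (\<Sum>(j, j')\<in>Sigma M (\<lambda>j. M - {j}). f (j, j'))"
    using assms by (subst sum.Sigma) auto
  also have "Sigma M (\<lambda>j. M - {j}) = {(j, j'). j \<in> M \<and> j' \<in> M \<and> j \<noteq> j'}" by auto
  finally show ?thesis by simp
qed

lemma kbound:
  fixes k :: nat
  shows "3 * real k - real k * real k \<le> 2"
proof (cases "k \<le> 1")
  case True
  then have "(real k - 1) * (real k - 2) \<ge> 0" by (intro mult_nonpos_nonpos) auto
  then show ?thesis by (simp add: algebra_simps)
next
  case False
  then have "(real k - 1) * (real k - 2) \<ge> 0" by (intro mult_nonneg_nonneg) auto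
  then show ?thesis by (simp add: algebra_simps)
qed

lemma vertex:
  assumes wo: "weak_order n W" and n4: "n \<ge> 4" and i1: "i1 \<in> {1..n}"
  shows "(\<Sum>j\<in>{1..n} - {i1}. char_vec n W (i1, j) + char_vec n W (j, i1))
           - (\<Sum>(j, j')\<in>{(j, j'). j \<in> {1..n} - {i1} \<and> j' \<in> {1..n} - {i1} \<and> j \<noteq> j'}. char_vec n W (j, j'))
         \<le> 2 - real ((n - 2) * (n - 3)) / 2"
proof -
  define M where "M = {1..n} - {i1}"
  define w where "w = (\<lambda>j j'. if (j, j') \<in> W then 1 else (0::real))"
  define e where "e = (\<lambda>j. w i1 j + w j i1 - 1)"
  define K where "K = {j \<in> M. (i1, j) \<in> W \<and> (j, i1) \<in> W}"
  have finM: "finite M" unfolding M_def by simp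
  have cM: "card M = n - 1" unfolding M_def using i1 by simp
  have tot: "total_on {1..n} W" and tr: "trans W" using wo unfolding weak_order_def by auto
  have vw: "char_vec n W (j, j') = w j j'" if "j \<in> {1..n}" "j' \<in> {1..n}" "j \<noteq> j'" for j j'
    using that unfolding char_vec_def arcs_def w_def by auto
  have e01: "e j = (if j \<in> K then 1 else 0)" if "j \<in> M" for j
  proof -
    have "(i1, j) \<in> W \<or> (j, i1) \<in> W" using that tot i1 unfolding M_def total_on_def by auto
    then show ?thesis using that unfolding e_def w_def K_def by auto
  qed
  have ee: "e j * e j = e j" if "j \<in> M" for j using e01[OF that] by simp
  have pair: "w j j' + w j' j \<ge> 1 + e j * e j'" if "j \<in> M" "j' \<in> M" "j \<noteq> j'" for j j'
  proof -
    have t: "(j, j') \<in> W \<or> (j', j) \<in> W" using tot that unfolding total_on_def M_def by auto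
    show ?thesis
    proof (cases "j \<in> K \<and> j' \<in> K")
      case True
      then have "(j, j') \<in> W" "(j', j) \<in> W" using tr unfolding K_def trans_def by blast+
      then show ?thesis using e01 that True by (simp add: w_def)
    next
      case False
      then have "e j * e j' = 0" using e01 that by auto
      then show ?thesis using t by (auto simp: w_def)
    qed
  qed
  have sumK: "(\<Sum>j\<in>M. e j) = real (card K)"
    using finM by (simp add: e01 sum.If_cases K_def Int_def)
  define S where "S = (\<Sum>j\<in>M. \<Sum>j'\<in>M. if j \<noteq> j' then w j j' else 0)"
  have S1: "(\<Sum>(j, j')\<in>{(j, j'). j \<in> M \<and> j' \<in> M \<and> j \<noteq> j'}. char_vec n W (j, j')) = S"
    unfolding S_def
    apply (subst pairsum_conv[OF finM])
    apply (rule sum.cong, simp, rule sum.cong, simp)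
    using vw unfolding M_def by auto
  have Sswap: "S = (\<Sum>j\<in>M. \<Sum>j'\<in>M. if j \<noteq> j' then w j' j else 0)"
    unfolding S_def by (subst sum.swap) (rule sum.cong, simp, rule sum.cong, auto)
  have "2 * S = (\<Sum>j\<in>M. \<Sum>j'\<in>M. if j \<noteq> j' then w j j' + w j' j else 0)"
  proof -
    have "2 * S = S + S" by simp
    also have "\<dots> = (\<Sum>j\<in>M. \<Sum>j'\<in>M. if j \<noteq> j' then w j j' else 0)
        + (\<Sum>j\<in>M. \<Sum>j'\<in>M. if j \<noteq> j' then w j' j else 0)"
      using Sswap S_def by simp
    also have "\<dots> = (\<Sum>j\<in>M. \<Sum>j'\<in>M. if j \<noteq> j' then w j j' + w j' j else 0)"
      by (simp add: sum.distrib[symmetric]) (rule sum.cong, simp, rule sum.cong, auto)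
    finally show ?thesis .
  qed
  also have "\<dots> \<ge> (\<Sum>j\<in>M. \<Sum>j'\<in>M. if j \<noteq> j' then 1 + e j * e j' else 0)"
    by (intro sum_mono) (auto simp: pair)
  finally have S2: "2 * S \<ge> (\<Sum>j\<in>M. \<Sum>j'\<in>M. if j \<noteq> j' then 1 + e j * e j' else 0)" .
  have inner: "(\<Sum>j'\<in>M. if j \<noteq> j' then 1 + e j * e j' else 0)
      = (\<Sum>j'\<in>M. 1 + e j * e j') - (1 + e j)" if "j \<in> M" for j
  proof -
    have "(\<Sum>j'\<in>M. 1 + e j * e j') = (1 + e j * e j) + (\<Sum>j'\<in>M - {j}. 1 + e j * e j')"
      using finM that by (simp add: sum.remove)
    moreover have "(\<Sum>j'\<in>M. if j \<noteq> j' then 1 + e j * e j' else 0) = (\<Sum>j'\<in>M - {j}. 1 + e j * e j')"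
      using finM that by (subst sum.If_cases) (auto intro!: sum.cong)
    ultimately show ?thesis using ee[OF that] by simp
  qed
  have "(\<Sum>j\<in>M. \<Sum>j'\<in>M. if j \<noteq> j' then 1 + e j * e j' else 0)
      = (\<Sum>j\<in>M. (\<Sum>j'\<in>M. 1 + e j * e j') - (1 + e j))"
    using inner by (rule sum.cong[OF refl])
  also have "\<dots> = real (card M) * real (card M) + real (card K) * real (card K) - real (card M) - real (card K)"
    by (simp add: sum_subtractf sum.distrib sum_distrib_left[symmetric] sum_distrib_right[symmetric] sumK)
  finally have S3: "2 * S \<ge> real (card M) * real (card M) + real (card K) * real (card K) - real (card M) - real (card K)"
    using S2 by simp
  have L: "(\<Sum>j\<in>M. char_vec n W (i1, j) + char_vec n W (j, i1)) = real (card M) + real (card K)"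
  proof -
    have "(\<Sum>j\<in>M. char_vec n W (i1, j) + char_vec n W (j, i1)) = (\<Sum>j\<in>M. 1 + e j)"
      apply (rule sum.cong, simp)
      using vw i1 unfolding M_def e_def by auto
    then show ?thesis by (simp add: sum.distrib sumK)
  qed
  have nn: "real ((n - 2) * (n - 3)) = (real n - 2) * (real n - 3)"
    using n4 by (simp add: of_nat_diff)
  have cMr: "real (card M) = real n - 1" using cM n4 by (simp add: of_nat_diff)
  show ?thesis
    unfolding M_def[symmetric] S1 L nn
    using S3 kbound[of "card K"] cMr by (simp add: algebra_simps) (simp add: field_simps)
qed

theorem mainTheorem1:
  fixes n i1 :: nat and x :: "nat \<times> nat \<Rightarrow> real"
  assumes "n \<ge> 4" and "i1 \<in> {1..n}"
    and "x \<in> weak_order_polytope n"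
  shows "(\<Sum>j\<in>{1..n} - {i1}. x (i1, j) + x (j, i1))
           - (\<Sum>(j, j')\<in>{(j, j'). j \<in> {1..n} - {i1} \<and> j' \<in> {1..n} - {i1} \<and> j \<noteq> j'}. x (j, j'))
         \<le> 2 - real ((n - 2) * (n - 3)) / 2"
proof -
  obtain F c where F: "finite F" "F \<subseteq> {W. weak_order n W}" "\<forall>W\<in>F. 0 \<le> c W"
    "sum c F = 1" and x: "x = (\<lambda>a. \<Sum>W\<in>F. c W * char_vec n W a)"
    using assms(3) unfolding weak_order_polytope_def by blast
  define P where "P = {(j, j'). j \<in> {1..n} - {i1} \<and> j' \<in> {1..n} - {i1} \<and> j \<noteq> j'}"
  define L where "L = (\<lambda>y :: nat \<times> nat \<Rightarrow> real. (\<Sum>j\<in>{1..n} - {i1}. y (i1, j) + y (j, i1))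
           - (\<Sum>(j, j')\<in>P. y (j, j')))"
  define B where "B = 2 - real ((n - 2) * (n - 3)) / 2"
  have lin: "L x = (\<Sum>W\<in>F. c W * L (char_vec n W))"
    unfolding L_def x
    by (simp add: sum_subtractf sum.distrib sum_distrib_left case_prod_beta algebra_simps
        sum.swap[of _ F] )
  also have "\<dots> \<le> (\<Sum>W\<in>F. c W * B)"
    apply (rule sum_mono)
    apply (rule mult_left_mono)
    using vertex[OF _ assms(1,2)] F unfolding L_def P_def B_def by auto
  also have "\<dots> = B" using F(4) by (simp add: sum_distrib_right[symmetric])
  finally show ?thesis unfolding L_def P_def B_def .
qed

end
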